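(* Let $m\ge1$ and let $X\subset\sqrt{m}\,\mathbb{S}^{m-1}$ be a spherical $2$-design with $|X|=n$ and degree $S$. For integers $i\ge0$ and $j$ with $i<j\le S$, we have $F_jG^{\circ i}=0$.
   Context: $\sqrt{m}\,\mathbb{S}^{m-1}=\{\bm x\in\mathbb{R}^m:\bm x\cdot\bm x=m\}$. $X$ is a spherical $2$-design if the average over $X$ of every polynomial of degree at most $2$ equals its average over the sphere. $C(X)$: real functions on $X$ with $(f,g)=\frac1n\sum_{\bm x}f(\bm x)g(\bm x)$. $\zeta_{\bm a}(p)(\bm x)=p(\bm a\cdot\bm x)$. $\mathrm{Pol}_0(X)$ = constants, $\mathrm{Pol}_1(X)=\mathrm{Span}\{\zeta_{\bm a}(p):\bm a\in X,\deg p\le1\}$, $\mathrm{Pol}_k(X)=\mathrm{Span}\{fg:f\in\mathrm{Pol}_1(X),g\in\mathrm{Pol}_{k-1}(X)\}$. Degree $S=\min\{i:\mathrm{Pol}_i(X)=C(X)\}$. $\mathrm{Harm}_0=\mathrm{Pol}_0$, $\mathrm{Harm}_k=\mathrm{Pol}_k\cap\mathrm{Pol}_{k-1}^\perp$. Matrices act on $C(X)$ by $(Mf)(\bm x)=\sum_{\bm y}M_{\bm x,\bm y}f(\bm y)$; $F_j$ ($0\le j\le S$) is the matrix of the orthogonal projection onto $\mathrm{Harm}_j(X)$. $G=\frac1n(\bm x\cdot\bm y)_{\bm x,\bm y\in X}$ and $G^{\circ i}$ is its $i$-th entrywise (Hadamard) power. *)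

theory Defs
  imports "HOL-Analysis.Analysis"
begin

definition quad_poly :: "real \<Rightarrow> real^'m \<Rightarrow> real^'m^'m \<Rightarrow> real^'m \<Rightarrow> real" where
  "quad_poly c b A x = c + (\<Sum>i\<in>UNIV. b$i * x$i) + (\<Sum>i\<in>UNIV. \<Sum>j\<in>UNIV. A$i$j * x$i * x$j)"

(* Average over the sphere sqrt(m) S^{m-1} w.r.t. the normalized (rotation invariant)
   surface measure, realised as the cone measure: push the uniform measure on the
   unit ball radially onto the sphere. *)
definition sphere_avg :: "(real^'m \<Rightarrow> real) \<Rightarrow> real" where
  "sphere_avg f = integral (ball 0 1)
       (\<lambda>x. f ((sqrt (real CARD('m)) / norm x) *\<^sub>R x)) / measure lebesgue (ball (0::real^'m) 1)"

definition spherical_2_design :: "(real^'m) set \<Rightarrow> bool" where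
  "spherical_2_design X \<longleftrightarrow> finite X \<and> X \<noteq> {} \<and>
     (\<forall>x\<in>X. x \<bullet> x = real CARD('m)) \<and>
     (\<forall>c b A. (\<Sum>x\<in>X. quad_poly c b A x) / real (card X) = sphere_avg (quad_poly c b A))"

definition CX :: "'a set \<Rightarrow> ('a \<Rightarrow> real) set" where
  "CX X = {f. \<forall>x. x \<notin> X \<longrightarrow> f x = 0}"

definition ip :: "'a set \<Rightarrow> ('a \<Rightarrow> real) \<Rightarrow> ('a \<Rightarrow> real) \<Rightarrow> real" where
  "ip X f g = (\<Sum>x\<in>X. f x * g x) / real (card X)"

definition fspan :: "('a \<Rightarrow> real) set \<Rightarrow> ('a \<Rightarrow> real) set" where
  "fspan B = {(\<lambda>x. \<Sum>g\<in>T. c g * g x) | T c. finite T \<and> T \<subseteq> B}"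

definition Pol1 :: "(real^'m) set \<Rightarrow> (real^'m \<Rightarrow> real) set" where
  "Pol1 X = fspan {(\<lambda>x. if x \<in> X then \<alpha> + \<beta> * (a \<bullet> x) else 0) | a \<alpha> \<beta>. a \<in> X}"

fun Pol :: "(real^'m) set \<Rightarrow> nat \<Rightarrow> (real^'m \<Rightarrow> real) set" where
  "Pol X 0 = fspan {(\<lambda>x. if x \<in> X then 1 else 0)}"
| "Pol X (Suc 0) = Pol1 X"
| "Pol X (Suc (Suc k)) = fspan {(\<lambda>x. f x * g x) | f g. f \<in> Pol1 X \<and> g \<in> Pol X (Suc k)}"

definition design_degree :: "(real^'m) set \<Rightarrow> nat" where
  "design_degree X = (LEAST i. Pol X i = CX X)"

fun Harm :: "(real^'m) set \<Rightarrow> nat \<Rightarrow> (real^'m \<Rightarrow> real) set" where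
  "Harm X 0 = Pol X 0"
| "Harm X (Suc k) = {f \<in> Pol X (Suc k). \<forall>g\<in>Pol X k. ip X f g = 0}"

definition mat_act :: "'a set \<Rightarrow> ('a \<Rightarrow> 'a \<Rightarrow> real) \<Rightarrow> ('a \<Rightarrow> real) \<Rightarrow> 'a \<Rightarrow> real" where
  "mat_act X M f = (\<lambda>x. if x \<in> X then (\<Sum>y\<in>X. M x y * f y) else 0)"

definition is_proj_matrix :: "'a set \<Rightarrow> ('a \<Rightarrow> real) set \<Rightarrow> ('a \<Rightarrow> 'a \<Rightarrow> real) \<Rightarrow> bool" where
  "is_proj_matrix X H M \<longleftrightarrow>
     (\<forall>f\<in>CX X. mat_act X M f \<in> H \<and> (\<forall>h\<in>H. ip X (\<lambda>x. f x - mat_act X M f x) h = 0))"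

definition gram :: "(real^'m) set \<Rightarrow> real^'m \<Rightarrow> real^'m \<Rightarrow> real" where
  "gram X x y = (x \<bullet> y) / real (card X)"

end

theory Submission
  imports Defs
begin

lemma fspan_gen: "g \<in> B \<Longrightarrow> g \<in> fspan B"
  unfolding fspan_def
  by (rule CollectI, rule exI[of _ "{g}"], rule exI[of _ "\<lambda>_. 1"]) auto

lemma fspan_vanish:
  assumes "\<And>g x. g \<in> B \<Longrightarrow> x \<notin> X \<Longrightarrow> g x = 0" "f \<in> fspan B" "x \<notin> X"
  shows "f x = 0"
  using assms unfolding fspan_def by (auto intro!: sum.neutral)

lemma Pol1_vanish: "f \<in> Pol1 X \<Longrightarrow> x \<notin> X \<Longrightarrow> f x = 0"
  unfolding Pol1_def by (erule fspan_vanish[rotated]) auto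

lemma Pol_vanish: "f \<in> Pol X k \<Longrightarrow> x \<notin> X \<Longrightarrow> f x = 0"
proof (induction X k arbitrary: f rule: Pol.induct)
  case (1 X) then show ?case by (auto elim!: fspan_vanish[rotated])
next
  case (2 X) then show ?case by (simp add: Pol1_vanish)
next
  case (3 X k)
  show ?case using 3(2,3)
    by (simp, erule_tac fspan_vanish[rotated]) (auto simp: Pol1_vanish)
qed

lemma ind_Pol1:
  assumes "X \<noteq> {}"
  shows "(\<lambda>x. if x \<in> X then c else 0) \<in> Pol1 X"
proof -
  obtain a where a: "a \<in> X" using assms by auto
  have "(\<lambda>x. if x \<in> X then c + 0 * (a \<bullet> x) else 0) \<in> Pol1 X"
    unfolding Pol1_def by (rule fspan_gen) (use a in blast)
  moreover have "(\<lambda>x. if x \<in> X then c + 0 * (a \<bullet> x) else 0) = (\<lambda>x. if x \<in> X then c else 0)"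
    by (auto simp: fun_eq_iff)
  ultimately show ?thesis by simp
qed

lemma Pol_mono_Suc:
  assumes "X \<noteq> {}" "f \<in> Pol X k"
  shows "f \<in> Pol X (Suc k)"
proof (cases k)
  case 0
  with assms(2) obtain T c where f: "f = (\<lambda>x. \<Sum>g\<in>T. c g * g x)" "finite T"
    "T \<subseteq> {(\<lambda>x. if x \<in> X then 1 else 0)}"
    by (auto simp: fspan_def)
  show ?thesis
  proof (cases "T = {}")
    case True
    have "(\<lambda>x. if x \<in> X then 0 else 0) \<in> Pol1 X" by (rule ind_Pol1[OF assms(1)])
    then show ?thesis using True f 0 by simp
  next
    case False
    then have T: "T = {(\<lambda>x. if x \<in> X then 1 else 0)}" using f(3) by auto
    have "(\<lambda>x. if x \<in> X then c (\<lambda>x. if x \<in> X then 1 else 0) else 0) \<in> Pol1 X"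
      by (rule ind_Pol1[OF assms(1)])
    moreover have "f = (\<lambda>x. if x \<in> X then c (\<lambda>x. if x \<in> X then 1 else 0) else 0)"
      using f(1) T by (auto simp: fun_eq_iff)
    ultimately show ?thesis using 0 by simp
  qed
next
  case (Suc k')
  have "f = (\<lambda>x. (if x \<in> X then 1 else 0) * f x)"
    using Pol_vanish[OF assms(2)] by (auto simp: fun_eq_iff)
  moreover have "(\<lambda>x. if x \<in> X then 1 else 0) \<in> Pol1 X" by (rule ind_Pol1[OF assms(1)])
  moreover have "(\<lambda>x. (if x \<in> X then 1 else 0) * f x) \<in> {(\<lambda>x. f x * g x) | f g. f \<in> Pol1 X \<and> g \<in> Pol X (Suc k')}"
    using assms(2) Suc calculation(2)
    by (intro CollectI exI[of _ "\<lambda>x. if x \<in> X then 1 else 0"] exI[of _ f]) simp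
  ultimately have "f \<in> {(\<lambda>x. f x * g x) | f g. f \<in> Pol1 X \<and> g \<in> Pol X (Suc k')}"
    by metis
  then show ?thesis using Suc by (simp add: fspan_gen)
qed

lemma Pol_mono:
  assumes "X \<noteq> {}" "i \<le> k" "f \<in> Pol X i" shows "f \<in> Pol X k"
  using assms(2)
proof (induction k rule: dec_induct)
  case base then show ?case using assms(3) by simp
next
  case (step n) then show ?case using Pol_mono_Suc assms(1) by blast
qed

lemma phi1:
  assumes "z \<in> X"
  shows "(\<lambda>y. if y \<in> X then (gram X y z) ^ Suc 0 else 0) \<in> Pol1 X"
proof -
  have "(\<lambda>x. if x \<in> X then 0 + (1 / real (card X)) * (z \<bullet> x) else 0) \<in> Pol1 X"
    unfolding Pol1_def by (rule fspan_gen) (use assms in blast)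
  moreover have "(\<lambda>x. if x \<in> X then 0 + (1 / real (card X)) * (z \<bullet> x) else 0)
     = (\<lambda>y. if y \<in> X then (gram X y z) ^ Suc 0 else 0)"
    by (auto simp: fun_eq_iff gram_def inner_commute)
  ultimately show ?thesis by metis
qed

lemma phi_Pol_Suc:
  assumes "z \<in> X"
  shows "(\<lambda>y. if y \<in> X then (gram X y z) ^ Suc k else 0) \<in> Pol X (Suc k)"
proof (induction k)
  case 0 show ?case using phi1[OF assms] by simp
next
  case (Suc n)
  have p1: "(\<lambda>y. if y \<in> X then (gram X y z) ^ Suc 0 else 0) \<in> Pol1 X"
    by (rule phi1[OF assms])
  have e: "(\<lambda>y. if y \<in> X then (gram X y z) ^ Suc (Suc n) else 0)
     = (\<lambda>y. (if y \<in> X then (gram X y z) ^ Suc 0 else 0) * (if y \<in> X then (gram X y z) ^ Suc n else 0))"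
    by (auto simp: fun_eq_iff)
  have "(\<lambda>y. (if y \<in> X then (gram X y z) ^ Suc 0 else 0) * (if y \<in> X then (gram X y z) ^ Suc n else 0)) \<in>
     {(\<lambda>x. f x * g x) | f g. f \<in> Pol1 X \<and> g \<in> Pol X (Suc n)}"
    using p1 Suc
    by (intro CollectI exI[of _ "\<lambda>y. if y \<in> X then (gram X y z) ^ Suc 0 else 0"]
        exI[of _ "\<lambda>y. if y \<in> X then (gram X y z) ^ Suc n else 0"]) (simp only: simp_thms)
  then show ?case unfolding e by (simp add: fspan_gen)
qed

lemma phi_Pol:
  assumes "X \<noteq> {}" "z \<in> X"
  shows "(\<lambda>y. if y \<in> X then (gram X y z) ^ i else 0) \<in> Pol X i"
proof (cases i)
  case 0 show ?thesis unfolding 0 power_0 Pol.simps by (rule fspan_gen) simp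
next
  case (Suc k) show ?thesis unfolding Suc by (rule phi_Pol_Suc[OF assms(2)])
qed

theorem lemma3p4:
  fixes X :: "(real^'m) set" and F :: "real^'m \<Rightarrow> real^'m \<Rightarrow> real" and i j :: nat
  assumes "spherical_2_design X"
    and "i < j" and "j \<le> design_degree X"
    and "is_proj_matrix X (Harm X j) F"
  shows "\<forall>x\<in>X. \<forall>z\<in>X. (\<Sum>y\<in>X. F x y * (gram X y z) ^ i) = 0"
proof (intro ballI)
  fix x z assume xX: "x \<in> X" and zX: "z \<in> X"
  have fin: "finite X" and ne: "X \<noteq> {}" using assms(1) by (auto simp: spherical_2_design_def)
  obtain k where j: "j = Suc k" and ik: "i \<le> k" using assms(2) by (cases j) auto
  define f where "f = (\<lambda>y. if y \<in> X then (gram X y z) ^ i else 0)"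
  define Ff where "Ff = mat_act X F f"
  have fP: "f \<in> Pol X k" unfolding f_def by (rule Pol_mono[OF ne ik phi_Pol[OF ne zX]])
  have fC: "f \<in> CX X" by (auto simp: CX_def f_def)
  have FH: "Ff \<in> Harm X j" and orth: "\<And>h. h \<in> Harm X j \<Longrightarrow> ip X (\<lambda>x. f x - Ff x) h = 0"
    using assms(4) fC unfolding is_proj_matrix_def Ff_def by auto
  have o1: "ip X Ff f = 0" using FH fP j by simp
  have o2: "ip X (\<lambda>x. f x - Ff x) Ff = 0" using orth[OF FH] .
  have cpos: "real (card X) > 0" using fin ne by (simp add: card_gt_0_iff)
  have "(\<Sum>y\<in>X. Ff y * f y) = 0" using o1 cpos by (simp add: ip_def)
  moreover have "(\<Sum>y\<in>X. (f y - Ff y) * Ff y) = 0" using o2 cpos by (simp add: ip_def)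
  ultimately have "(\<Sum>y\<in>X. Ff y * Ff y) = 0"
    by (simp add: algebra_simps sum_subtractf mult.commute)
  then have "\<forall>y\<in>X. Ff y * Ff y = 0"
    using sum_nonneg_eq_0_iff[OF fin, of "\<lambda>y. Ff y * Ff y"] by simp
  then have "Ff x = 0" using xX by simp
  moreover have "Ff x = (\<Sum>y\<in>X. F x y * (gram X y z) ^ i)"
    unfolding Ff_def mat_act_def f_def using xX by (auto intro!: sum.cong)
  ultimately show "(\<Sum>y\<in>X. F x y * (gram X y z) ^ i) = 0" by simp
qed

end
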